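(* Let $G$ be a proper interval graph with no twin vertices, let $\sigma$ be a proper interval ordering of $G$, let each node of the line-incompatibility graph $\widehat{G}$ carry a positive weight, and let $I_{\widehat{G}}$ be a maximum-weight independent set of $\widehat{G}$. Let $x,y,z$ be vertices of $G$ with $x\prec y\prec z$ in $\sigma$ and $xz\in I_{\widehat{G}}$. (1) If $xy\notin I_{\widehat{G}}$ and $yz\in I_{\widehat{G}}$, then $xy$ is non-adjacent in $\widehat{G}$ to every node of the form $x_\ell x\in I_{\widehat{G}}$, and there is a vertex $w$ such that $yw\in I_{\widehat{G}}$, $\{x,w\}\notin E(G)$, and $z\prec w$. (2) If $xy\in I_{\widehat{G}}$ and $yz\notin I_{\widehat{G}}$, then $yz$ is non-adjacent in $\widehat{G}$ to every node of the form $zz_r\in I_{\widehat{G}}$, and there is a vertex $w$ such that $wy\in I_{\widehat{G}}$, $\{w,z\}\notin E(G)$, and $w\prec x$.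
   Context: All graphs are finite, simple and undirected. Two adjacent vertices $u,v$ are twins if $N[u]=N[v]$. A vertex ordering $\sigma$ of $G$ is a proper interval ordering if for all vertices $x\prec y\prec z$ in $\sigma$, $\{x,z\}\in E(G)$ implies $\{x,y\},\{y,z\}\in E(G)$; a graph is a proper interval graph if and only if it admits a proper interval ordering. The line-incompatibility graph $\widehat{G}$ of $G$ has one node $uv$ for each edge $\{u,v\}$ of $G$, two nodes being adjacent iff the corresponding edges are of the form $\{u,v\},\{v,w\}$ with $\{u,w\}\notin E(G)$. A maximum-weight independent set is an independent set maximizing the total weight of its nodes. *)

theory Defs
  imports Complex_Main
begin

definition simple_graph :: "'a set \<Rightarrow> ('a \<Rightarrow> 'a \<Rightarrow> bool) \<Rightarrow> bool" where
  "simple_graph V E \<longleftrightarrow> finite V \<and> (\<forall>u v. E u v \<longrightarrow> E v u)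
     \<and> (\<forall>u. \<not> E u u) \<and> (\<forall>u v. E u v \<longrightarrow> u \<in> V \<and> v \<in> V)"

definition closed_nbhd :: "'a set \<Rightarrow> ('a \<Rightarrow> 'a \<Rightarrow> bool) \<Rightarrow> 'a \<Rightarrow> 'a set" where
  "closed_nbhd V E u = {v \<in> V. E u v} \<union> {u}"

definition twins :: "'a set \<Rightarrow> ('a \<Rightarrow> 'a \<Rightarrow> bool) \<Rightarrow> 'a \<Rightarrow> 'a \<Rightarrow> bool" where
  "twins V E u v \<longleftrightarrow> E u v \<and> closed_nbhd V E u = closed_nbhd V E v"

definition twin_free :: "'a set \<Rightarrow> ('a \<Rightarrow> 'a \<Rightarrow> bool) \<Rightarrow> bool" where
  "twin_free V E \<longleftrightarrow> (\<forall>u\<in>V. \<forall>v\<in>V. \<not> twins V E u v)"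

definition vertex_ordering :: "'a set \<Rightarrow> 'a list \<Rightarrow> bool" where
  "vertex_ordering V \<sigma> \<longleftrightarrow> distinct \<sigma> \<and> set \<sigma> = V"

definition prec :: "'a list \<Rightarrow> 'a \<Rightarrow> 'a \<Rightarrow> bool" where
  "prec \<sigma> x y \<longleftrightarrow> (\<exists>i j. i < j \<and> j < length \<sigma> \<and> \<sigma> ! i = x \<and> \<sigma> ! j = y)"

definition proper_interval_ordering :: "'a set \<Rightarrow> ('a \<Rightarrow> 'a \<Rightarrow> bool) \<Rightarrow> 'a list \<Rightarrow> bool" where
  "proper_interval_ordering V E \<sigma> \<longleftrightarrow> vertex_ordering V \<sigma> \<and>
     (\<forall>x y z. prec \<sigma> x y \<and> prec \<sigma> y z \<and> E x z \<longrightarrow> E x y \<and> E y z)"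

definition proper_interval_graph :: "'a set \<Rightarrow> ('a \<Rightarrow> 'a \<Rightarrow> bool) \<Rightarrow> bool" where
  "proper_interval_graph V E \<longleftrightarrow> simple_graph V E \<and> (\<exists>\<sigma>. proper_interval_ordering V E \<sigma>)"

definition lig_nodes :: "'a set \<Rightarrow> ('a \<Rightarrow> 'a \<Rightarrow> bool) \<Rightarrow> 'a set set" where
  "lig_nodes V E = {{u, v} | u v. u \<in> V \<and> v \<in> V \<and> E u v}"

definition lig_adj :: "('a \<Rightarrow> 'a \<Rightarrow> bool) \<Rightarrow> 'a set \<Rightarrow> 'a set \<Rightarrow> bool" where
  "lig_adj E e f \<longleftrightarrow> (\<exists>u v w. e = {u, v} \<and> f = {v, w} \<and> E u v \<and> E v w \<and> u \<noteq> w \<and> \<not> E u w)"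

definition lig_independent :: "'a set \<Rightarrow> ('a \<Rightarrow> 'a \<Rightarrow> bool) \<Rightarrow> 'a set set \<Rightarrow> bool" where
  "lig_independent V E I \<longleftrightarrow> I \<subseteq> lig_nodes V E \<and> (\<forall>e\<in>I. \<forall>f\<in>I. \<not> lig_adj E e f)"

definition lig_max_weight_independent ::
    "'a set \<Rightarrow> ('a \<Rightarrow> 'a \<Rightarrow> bool) \<Rightarrow> ('a set \<Rightarrow> real) \<Rightarrow> 'a set set \<Rightarrow> bool" where
  "lig_max_weight_independent V E wt I \<longleftrightarrow> lig_independent V E I \<and>
     (\<forall>J. lig_independent V E J \<longrightarrow> sum wt J \<le> sum wt I)"

end

theory Submission
  imports Defs
begin

lemma prec_set: "prec s a b \<Longrightarrow> a \<in> set s \<and> b \<in> set s"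
  unfolding prec_def by (metis nth_mem order.strict_trans)

lemma prec_neq: "distinct s \<Longrightarrow> prec s a b \<Longrightarrow> a \<noteq> b"
  unfolding prec_def using nth_eq_iff_index_eq by fastforce

lemma prec_trans: "distinct s \<Longrightarrow> prec s a b \<Longrightarrow> prec s b c \<Longrightarrow> prec s a c"
  unfolding prec_def
proof (elim exE conjE)
  fix i j i' j'
  assume d: "distinct s" and h: "i < j" "j < length s" "s ! i = a" "s ! j = b"
    "i' < j'" "j' < length s" "s ! i' = b" "s ! j' = c"
  then have "j = i'" using nth_eq_iff_index_eq by fastforce
  then show "\<exists>i j. i < j \<and> j < length s \<and> s ! i = a \<and> s ! j = c" using h
    by (intro exI[of _ i] exI[of _ j']) auto
qed

lemma prec_asym: "distinct s \<Longrightarrow> prec s a b \<Longrightarrow> prec s b a \<Longrightarrow> False"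
  using prec_trans prec_neq by metis

lemma prec_total: "a \<in> set s \<Longrightarrow> b \<in> set s \<Longrightarrow> a \<noteq> b \<Longrightarrow> prec s a b \<or> prec s b a"
  unfolding prec_def in_set_conv_nth
  by (metis linorder_neqE_nat)

lemma prec_rev: "prec (rev s) a b \<longleftrightarrow> prec s b a"
proof
  assume "prec (rev s) a b"
  then obtain i j where h: "i < j" "j < length s" "rev s ! i = a" "rev s ! j = b"
    unfolding prec_def by auto
  then show "prec s b a" unfolding prec_def
    by (intro exI[of _ "length s - 1 - j"] exI[of _ "length s - 1 - i"]) (auto simp: rev_nth)
next
  assume "prec s b a"
  then obtain i j where h: "i < j" "j < length s" "s ! i = b" "s ! j = a"
    unfolding prec_def by auto
  then show "prec (rev s) a b" unfolding prec_def
    by (intro exI[of _ "length s - 1 - j"] exI[of _ "length s - 1 - i"]) (auto simp: rev_nth)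
qed

lemma pio_rev: "proper_interval_ordering V E s \<Longrightarrow> simple_graph V E \<Longrightarrow> proper_interval_ordering V E (rev s)"
  unfolding proper_interval_ordering_def vertex_ordering_def prec_rev simple_graph_def
  by (metis distinct_rev set_rev)

lemma indep_edge:
  assumes sg: "simple_graph V E" and ind: "lig_independent V E I"
    and "{a, b} \<in> I" "{b, c} \<in> I" "a \<noteq> c" "E a b" "E b c"
  shows "E a c"
proof (rule ccontr)
  assume "\<not> E a c"
  then have "lig_adj E {a, b} {b, c}" unfolding lig_adj_def using assms by blast
  then show False using ind assms unfolding lig_independent_def by blast
qed

lemma lig_adj_sym: "simple_graph V E \<Longrightarrow> lig_adj E e f \<Longrightarrow> lig_adj E f e"
  unfolding lig_adj_def simple_graph_def
  by (metis insert_commute)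

lemma lig_adj_self: "\<not> lig_adj E e e"
  unfolding lig_adj_def by (auto simp: doubleton_eq_iff)

lemma part1:
  assumes sg: "simple_graph V E"
    and pio: "proper_interval_ordering V E \<sigma>"
    and pos: "\<forall>e\<in>lig_nodes V E. wt e > 0"
    and mwis: "lig_max_weight_independent V E wt I"
    and xy: "prec \<sigma> x y" and yz: "prec \<sigma> y z"
    and xz: "{x, z} \<in> I"
    and nxy: "{x, y} \<notin> I" and iyz: "{y, z} \<in> I"
  shows "(\<forall>xl. prec \<sigma> xl x \<and> {xl, x} \<in> I \<longrightarrow> \<not> lig_adj E {x, y} {xl, x}) \<and>
            (\<exists>w. {y, w} \<in> I \<and> \<not> E x w \<and> prec \<sigma> z w)"
proof -
  have d: "distinct \<sigma>" and sV: "set \<sigma> = V"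
    and pi: "\<And>a b c. prec \<sigma> a b \<Longrightarrow> prec \<sigma> b c \<Longrightarrow> E a c \<Longrightarrow> E a b \<and> E b c"
    using pio unfolding proper_interval_ordering_def vertex_ordering_def by blast+
  have sym: "\<And>a b. E a b \<Longrightarrow> E b a" and irr: "\<And>a. \<not> E a a"
    and inV: "\<And>a b. E a b \<Longrightarrow> a \<in> V \<and> b \<in> V" and finV: "finite V"
    using sg unfolding simple_graph_def by blast+
  have ind: "lig_independent V E I" using mwis unfolding lig_max_weight_independent_def by blast
  have xzp: "prec \<sigma> x z" using prec_trans[OF d xy yz] .
  have Exz: "E x z"
  proof -
    have "{x, z} \<in> lig_nodes V E" using ind xz unfolding lig_independent_def by blast
    then obtain u v where "{x, z} = {u, v}" "E u v" unfolding lig_nodes_def by blast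
    then show ?thesis using sym by (auto simp: doubleton_eq_iff)
  qed
  have Exy: "E x y" and Eyz: "E y z" using pi[OF xy yz Exz] by auto
  have EI: "\<And>a b. {a, b} \<in> I \<Longrightarrow> E a b"
  proof -
    fix a b assume "{a, b} \<in> I"
    then have "{a, b} \<in> lig_nodes V E" using ind unfolding lig_independent_def by blast
    then obtain u v where "{a, b} = {u, v}" "E u v" unfolding lig_nodes_def by blast
    then show "E a b" using sym irr by (auto simp: doubleton_eq_iff)
  qed
  have A: "\<forall>xl. prec \<sigma> xl x \<and> {xl, x} \<in> I \<longrightarrow> \<not> lig_adj E {x, y} {xl, x}"
  proof (intro allI impI)
    fix xl assume h: "prec \<sigma> xl x \<and> {xl, x} \<in> I"
    have xlx: "prec \<sigma> xl x" and xlI: "{xl, x} \<in> I" using h by auto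
    have xly: "prec \<sigma> xl y" using prec_trans[OF d xlx xy] .
    have xlz: "prec \<sigma> xl z" using prec_trans[OF d xly yz] .
    have Exlz: "E xl z"
      using indep_edge[OF sg ind xlI xz prec_neq[OF d xlz] EI[OF xlI] Exz] .
    have Exly: "E xl y" using pi[OF xly yz Exlz] by blast
    have n1: "xl \<noteq> y" "x \<noteq> y" "xl \<noteq> x" using prec_neq[OF d] xly xy xlx by auto
    show "\<not> lig_adj E {x, y} {xl, x}"
      unfolding lig_adj_def using n1 Exly sym by (auto simp: doubleton_eq_iff)
  qed
  have B: "\<exists>w. {y, w} \<in> I \<and> \<not> E x w \<and> prec \<sigma> z w"
  proof (rule ccontr)
    assume nB: "\<not> ?thesis"
    have noadj: "\<not> lig_adj E {x, y} f" if fI: "f \<in> I" for f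
    proof
      assume "lig_adj E {x, y} f"
      then obtain u v w where h: "{x, y} = {u, v}" "f = {v, w}" "E u v" "E v w" "u \<noteq> w" "\<not> E u w"
        unfolding lig_adj_def by blast
      have wV: "w \<in> set \<sigma>" using inV h(4) sV by blast
      have xV: "x \<in> set \<sigma>" and yV: "y \<in> set \<sigma>" and zV: "z \<in> set \<sigma>"
        using prec_set[OF xy] prec_set[OF yz] by blast+
      from h(1) consider "u = x" "v = y" | "u = y" "v = x" by (auto simp: doubleton_eq_iff)
      then show False
      proof cases
        case 1
        have fI': "{y, w} \<in> I" using fI h 1 by simp
        have nxw: "\<not> E x w" "E y w" "x \<noteq> w" using h 1 by auto
        have wy: "w \<noteq> y" using irr nxw(2) by blast
        show False
        proof (cases "prec \<sigma> w x")
          case True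
          then show ?thesis using pi[OF True xy sym[OF nxw(2)]] nxw sym by blast
        next
          case False
          then have xw: "prec \<sigma> x w" using prec_total[OF wV xV] nxw(3) by blast
          show ?thesis
          proof (cases "prec \<sigma> w y")
            case True
            then show ?thesis using pi[OF xw True Exy] nxw by blast
          next
            case False
            then have yw: "prec \<sigma> y w" using prec_total[OF wV yV] wy by blast
            show ?thesis
            proof (cases "w = z")
              case True then show ?thesis using Exz nxw by simp
            next
              case False
              then consider "prec \<sigma> w z" | "prec \<sigma> z w" using prec_total[OF wV zV] by blast
              then show ?thesis
              proof cases
                case 1 then show ?thesis using pi[OF xw 1 Exz] nxw by blast
              next
                case 2 then show ?thesis using nB fI' nxw by blast
              qed
            qed
          qed
        qed
      next
        case 2
        have fI': "{x, w} \<in> I" using fI h 2 by simp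
        have nyw: "\<not> E y w" "E x w" "y \<noteq> w" using h 2 by auto
        have wx: "w \<noteq> x" using irr nyw(2) by blast
        have wz: "w \<noteq> z" using Eyz nyw by blast
        have Ewz: "E w z"
          using indep_edge[OF sg ind _ xz wz sym[OF nyw(2)] Exz] fI' by (simp add: insert_commute)
        show False
        proof (cases "prec \<sigma> w x")
          case True
          have wy: "prec \<sigma> w y" using prec_trans[OF d True xy] .
          then show ?thesis using pi[OF wy yz Ewz] nyw sym by blast
        next
          case False
          then have xw: "prec \<sigma> x w" using prec_total[OF wV xV] wx by blast
          show ?thesis
          proof (cases "prec \<sigma> w y")
            case True
            then show ?thesis using pi[OF xw True Exy] nyw sym by blast
          next
            case False
            then have yw: "prec \<sigma> y w" using prec_total[OF wV yV] nyw(3) by blast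
            then show ?thesis using pi[OF xy yw nyw(2)] nyw by blast
          qed
        qed
      qed
    qed
    have indJ: "lig_independent V E (insert {x, y} I)"
    proof -
      have "{x, y} \<in> lig_nodes V E" unfolding lig_nodes_def using inV[OF Exy] Exy by blast
      moreover have "\<forall>e\<in>insert {x, y} I. \<forall>f\<in>insert {x, y} I. \<not> lig_adj E e f"
        using ind noadj lig_adj_sym[OF sg] lig_adj_self unfolding lig_independent_def by blast
      ultimately show ?thesis using ind unfolding lig_independent_def by blast
    qed
    have finI: "finite I"
    proof -
      have "lig_nodes V E \<subseteq> Pow V" unfolding lig_nodes_def using inV by blast
      then have "finite (lig_nodes V E)" using finV finite_subset by blast
      then show ?thesis using ind unfolding lig_independent_def using finite_subset by blast
    qed
    have "{x, y} \<in> lig_nodes V E" unfolding lig_nodes_def using inV[OF Exy] Exy by blast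
    then have "wt {x, y} > 0" using pos by blast
    then have "sum wt (insert {x, y} I) > sum wt I" using finI nxy by simp
    moreover have "sum wt (insert {x, y} I) \<le> sum wt I"
      using mwis indJ unfolding lig_max_weight_independent_def by blast
    ultimately show False by simp
  qed
  show ?thesis using A B by blast
qed

theorem lemma8:
  fixes V :: "'a set" and E :: "'a \<Rightarrow> 'a \<Rightarrow> bool" and \<sigma> :: "'a list"
    and wt :: "'a set \<Rightarrow> real" and I :: "'a set set" and x y z :: 'a
  assumes G: "proper_interval_graph V E"
    and tf: "twin_free V E"
    and pio: "proper_interval_ordering V E \<sigma>"
    and pos: "\<forall>e\<in>lig_nodes V E. wt e > 0"
    and mwis: "lig_max_weight_independent V E wt I"
    and xy: "prec \<sigma> x y" and yz: "prec \<sigma> y z"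
    and xz: "{x, z} \<in> I"
  shows "({x, y} \<notin> I \<and> {y, z} \<in> I \<longrightarrow>
            (\<forall>xl. prec \<sigma> xl x \<and> {xl, x} \<in> I \<longrightarrow> \<not> lig_adj E {x, y} {xl, x}) \<and>
            (\<exists>w. {y, w} \<in> I \<and> \<not> E x w \<and> prec \<sigma> z w))
       \<and> ({x, y} \<in> I \<and> {y, z} \<notin> I \<longrightarrow>
            (\<forall>zr. prec \<sigma> z zr \<and> {z, zr} \<in> I \<longrightarrow> \<not> lig_adj E {y, z} {z, zr}) \<and>
            (\<exists>w. {w, y} \<in> I \<and> \<not> E w z \<and> prec \<sigma> w x))"
proof -
  have sg: "simple_graph V E" using G unfolding proper_interval_graph_def by blast
  have d: "distinct \<sigma>" using pio unfolding proper_interval_ordering_def vertex_ordering_def by blast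
  have sym: "\<And>a b. E a b \<Longrightarrow> E b a" using sg unfolding simple_graph_def by blast
  have P1: "{x, y} \<notin> I \<and> {y, z} \<in> I \<longrightarrow>
            (\<forall>xl. prec \<sigma> xl x \<and> {xl, x} \<in> I \<longrightarrow> \<not> lig_adj E {x, y} {xl, x}) \<and>
            (\<exists>w. {y, w} \<in> I \<and> \<not> E x w \<and> prec \<sigma> z w)"
    using part1[OF sg pio pos mwis xy yz xz] by blast
  have P2: "{x, y} \<in> I \<and> {y, z} \<notin> I \<longrightarrow>
            (\<forall>zr. prec \<sigma> z zr \<and> {z, zr} \<in> I \<longrightarrow> \<not> lig_adj E {y, z} {z, zr}) \<and>
            (\<exists>w. {w, y} \<in> I \<and> \<not> E w z \<and> prec \<sigma> w x)"
  proof
    assume h: "{x, y} \<in> I \<and> {y, z} \<notin> I"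
    have r: "(\<forall>xl. prec (rev \<sigma>) xl z \<and> {xl, z} \<in> I \<longrightarrow> \<not> lig_adj E {z, y} {xl, z}) \<and>
            (\<exists>w. {y, w} \<in> I \<and> \<not> E z w \<and> prec (rev \<sigma>) x w)"
      using part1[OF sg pio_rev[OF pio sg] pos mwis, of z y x] h xz xy yz
      by (simp add: prec_rev insert_commute)
    then show "(\<forall>zr. prec \<sigma> z zr \<and> {z, zr} \<in> I \<longrightarrow> \<not> lig_adj E {y, z} {z, zr}) \<and>
            (\<exists>w. {w, y} \<in> I \<and> \<not> E w z \<and> prec \<sigma> w x)"
      using sym by (simp add: prec_rev insert_commute) metis
  qed
  show ?thesis using P1 P2 by blast
qed

end
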